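(* Let $q$ be a prime power, let $G=\{g_1,\dots,g_n\}$ be a finite group of order $n$ (with this fixed ordering), let $v\in\mathbb{F}_qG$, and let $C(v)\subseteq\mathbb{F}_q^n$ be the row space of $\sigma_G(v)$. Suppose $|\mathrm{PAut}(C(v))|=n$ and $\pi\in\mathrm{PAut}(C(v))$ is of type $p$-$(c,f)$ with $p\neq1$. Then $f=0$; that is, $\pi$ has no fixed points (so $p$ is the order of $\pi$ and $n=pc$).
   Context: $\mathbb{F}_qG$ is the group ring; an element $v=\sum_i\alpha_{g_i}g_i$ is identified with the vector $(\alpha_{g_1},\dots,\alpha_{g_n})\in\mathbb{F}_q^n$. The group ring matrix $\sigma_G(v)$ is the $n\times n$ matrix whose $(i,j)$ entry is $\alpha_{g_i^{-1}g_j}$. For a code $\mathcal{C}\subseteq\mathbb{F}_q^n$, $\mathrm{PAut}(\mathcal{C})=\{\pi\in S_n:\pi(\mathcal{C})=\mathcal{C}\}$, where $S_n$ acts by permuting coordinates. A permutation $\pi\in S_n$ is of type $p$-$(c,f)$ if its disjoint cycle decomposition consists of exactly $c$ cycles of length $p$ and $f$ fixed points (and no other cycles). *)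

theory Defs
  imports "HOL-Algebra.Group" "HOL-Combinatorics.Permutations"
begin

text \<open>Vectors of F_q^n are functions nat => 'a that vanish outside {0..<n}.
  The group G is listed as g 0, ..., g (n-1) (a bijection {0..<n} -> carrier G).
  An element v of F_q G is its coefficient function v :: 'g => 'a.\<close>

definition group_ring_matrix :: "('g, 'b) monoid_scheme \<Rightarrow> (nat \<Rightarrow> 'g) \<Rightarrow> ('g \<Rightarrow> 'a) \<Rightarrow> nat \<Rightarrow> nat \<Rightarrow> 'a" where
  "group_ring_matrix G g v i j = v (inv\<^bsub>G\<^esub> (g i) \<otimes>\<^bsub>G\<^esub> g j)"

definition row_space :: "nat \<Rightarrow> (nat \<Rightarrow> nat \<Rightarrow> 'a::field) \<Rightarrow> (nat \<Rightarrow> 'a) set" where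
  "row_space n M = {x. \<exists>a :: nat \<Rightarrow> 'a. x = (\<lambda>j. if j < n then (\<Sum>i<n. a i * M i j) else 0)}"

definition perm_vec :: "(nat \<Rightarrow> nat) \<Rightarrow> (nat \<Rightarrow> 'a) \<Rightarrow> nat \<Rightarrow> 'a" where
  "perm_vec \<pi> x = (\<lambda>j. x (Hilbert_Choice.inv \<pi> j))"

definition PAut :: "nat \<Rightarrow> (nat \<Rightarrow> 'a) set \<Rightarrow> (nat \<Rightarrow> nat) set" where
  "PAut n C = {\<pi>. \<pi> permutes {0..<n} \<and> perm_vec \<pi> ` C = C}"

definition perm_orbit :: "(nat \<Rightarrow> nat) \<Rightarrow> nat \<Rightarrow> nat set" where
  "perm_orbit \<pi> i = {(\<pi> ^^ k) i | k. True}"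

definition perm_type :: "nat \<Rightarrow> (nat \<Rightarrow> nat) \<Rightarrow> nat \<Rightarrow> nat \<Rightarrow> nat \<Rightarrow> bool" where
  "perm_type n \<pi> p c f \<longleftrightarrow>
     \<pi> permutes {0..<n} \<and>
     (\<forall>i<n. card (perm_orbit \<pi> i) = 1 \<or> card (perm_orbit \<pi> i) = p) \<and>
     c = card {perm_orbit \<pi> i | i. i < n \<and> card (perm_orbit \<pi> i) = p} \<and>
     f = card {i. i < n \<and> \<pi> i = i}"

end

theory Submission
  imports Defs
begin

lemma perm_vec_row_space:
  fixes M :: "nat \<Rightarrow> nat \<Rightarrow> 'a::field"
  assumes sp: "\<sigma> permutes {0..<n}" and inv: "\<And>i k. i < n \<Longrightarrow> k < n \<Longrightarrow> M (\<sigma> i) (\<sigma> k) = M i k"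
  shows "perm_vec \<sigma> ` row_space n M \<subseteq> row_space n M"
proof
  fix y assume "y \<in> perm_vec \<sigma> ` row_space n M"
  then obtain x a where y: "y = perm_vec \<sigma> x" and x: "x = (\<lambda>j. if j < n then (\<Sum>i<n. a i * M i j) else 0)"
    unfolding row_space_def by auto
  have iv: "Hilbert_Choice.inv \<sigma> permutes {0..<n}" using sp by (rule permutes_inv)
  have "y = (\<lambda>j. if j < n then (\<Sum>i<n. a (Hilbert_Choice.inv \<sigma> i) * M i j) else 0)"
  proof
    fix j
    show "y j = (if j < n then (\<Sum>i<n. a (Hilbert_Choice.inv \<sigma> i) * M i j) else 0)"
    proof (cases "j < n")
      case True
      let ?k = "Hilbert_Choice.inv \<sigma> j"
      have k: "?k < n" using permutes_in_image[OF iv] True by auto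
      have sk: "\<sigma> ?k = j" using permutes_inverses(1)[OF sp] by simp
      have "y j = (\<Sum>i<n. a i * M i ?k)" using y x k by (simp add: perm_vec_def)
      also have "\<dots> = (\<Sum>i<n. a i * M (\<sigma> i) j)"
        using inv k sk by (metis (no_types, lifting) lessThan_iff sum.cong)
      also have "\<dots> = (\<Sum>i<n. (\<lambda>i. a (Hilbert_Choice.inv \<sigma> i) * M i j) (\<sigma> i))"
        using permutes_inverses(2)[OF sp] by simp
      also have "\<dots> = (\<Sum>i<n. a (Hilbert_Choice.inv \<sigma> i) * M i j)"
        using sum.permute[OF sp, of "\<lambda>i. a (Hilbert_Choice.inv \<sigma> i) * M i j"]
        by (simp add: atLeast0LessThan comp_def)
      finally show ?thesis using True by simp
    next
      case False
      hence "Hilbert_Choice.inv \<sigma> j = j" using permutes_not_in[OF iv] by auto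
      thus ?thesis using False y x by (simp add: perm_vec_def)
    qed
  qed
  thus "y \<in> row_space n M" unfolding row_space_def by (intro CollectI exI)
qed

lemma perm_vec_comp_inv:
  assumes sp: "\<sigma> permutes S" and tp: "\<tau> permutes S" and st: "\<And>j. \<sigma> (\<tau> j) = j"
  shows "perm_vec \<sigma> (perm_vec \<tau> x) = x"
proof
  fix j
  have "Hilbert_Choice.inv \<sigma> j = \<tau> j" using permutes_inv_eq[OF sp] st by blast
  moreover have "Hilbert_Choice.inv \<tau> (\<tau> j) = j" using permutes_inverses(2)[OF tp] by simp
  ultimately show "perm_vec \<sigma> (perm_vec \<tau> x) j = x j" by (simp add: perm_vec_def)
qed

theorem theorem4p2:
  fixes G :: "('g, 'b) monoid_scheme" and g :: "nat \<Rightarrow> 'g"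
    and v :: "'g \<Rightarrow> 'a :: {finite, field}"
    and n p c f :: nat and \<pi> :: "nat \<Rightarrow> nat"
  assumes "group G" and "finite (carrier G)" and "n = card (carrier G)"
    and "bij_betw g {0..<n} (carrier G)"
    and "card (PAut n (row_space n (group_ring_matrix G g v))) = n"
    and "\<pi> \<in> PAut n (row_space n (group_ring_matrix G g v))"
    and "perm_type n \<pi> p c f" and "p \<noteq> 1" and "0 < c"
  shows "f = 0"
proof -
  interpret group G by fact
  note gb = assms(4)
  define M where "M = group_ring_matrix G g v"
  define C where "C = row_space n M"
  define sig where "sig h = (\<lambda>j. if j < n then inv_into {0..<n} g (h \<otimes>\<^bsub>G\<^esub> g j) else j)" for h
  have gin: "g j \<in> carrier G" if "j < n" for j using gb that by (auto simp: bij_betw_def)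
  have ginv: "inv_into {0..<n} g (g j) = j" if "j < n" for j
    using gb that by (simp add: bij_betw_inv_into_left)
  have sig1: "sig h j < n \<and> g (sig h j) = h \<otimes>\<^bsub>G\<^esub> g j" if "h \<in> carrier G" "j < n" for h j
  proof -
    have "h \<otimes>\<^bsub>G\<^esub> g j \<in> g ` {0..<n}" using gb that gin by (auto simp: bij_betw_def)
    thus ?thesis using that unfolding sig_def
      by (auto simp: inv_into_into f_inv_into_f ginv)
  qed
  have sigout: "sig h j = j" if "\<not> j < n" for h j using that by (simp add: sig_def)
  have sigperm: "sig h permutes {0..<n}" if h: "h \<in> carrier G" for h
  proof (rule bij_imp_permutes)
    show "\<And>x. x \<notin> {0..<n} \<Longrightarrow> sig h x = x" using sigout by auto
    have inj: "inj_on (sig h) {0..<n}"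
    proof (rule inj_onI)
      fix x y assume xy: "x \<in> {0..<n}" "y \<in> {0..<n}" "sig h x = sig h y"
      hence "h \<otimes>\<^bsub>G\<^esub> g x = h \<otimes>\<^bsub>G\<^esub> g y" using sig1[OF h] by (metis atLeastLessThan_iff)
      hence "g x = g y" using h xy gin by (simp add: Units_eq)
      thus "x = y" using gb xy by (metis ginv atLeastLessThan_iff)
    qed
    have "sig h ` {0..<n} = {0..<n}"
    proof
      show "sig h ` {0..<n} \<subseteq> {0..<n}" using sig1[OF h] by auto
      show "{0..<n} \<subseteq> sig h ` {0..<n}"
      proof
        fix k assume k: "k \<in> {0..<n}"
        have "inv\<^bsub>G\<^esub> h \<otimes>\<^bsub>G\<^esub> g k \<in> g ` {0..<n}" using gb k gin h by (auto simp: bij_betw_def)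
        then obtain j where j: "j \<in> {0..<n}" "g j = inv\<^bsub>G\<^esub> h \<otimes>\<^bsub>G\<^esub> g k" by auto
        have "g (sig h j) = g k" using sig1[OF h] j h k gin by (simp add: m_assoc[symmetric])
        hence "sig h j = k" using sig1[OF h] j k by (metis ginv atLeastLessThan_iff)
        thus "k \<in> sig h ` {0..<n}" using j by blast
      qed
    qed
    thus "bij_betw (sig h) {0..<n} {0..<n}" using inj by (simp add: bij_betw_def)
  qed
  have sigM: "M (sig h i) (sig h k) = M i k" if h: "h \<in> carrier G" and "i < n" "k < n" for h i k
    using sig1[OF h] that gin
    by (simp add: M_def group_ring_matrix_def inv_mult_group m_assoc[symmetric])
       (simp add: m_assoc)
  have sigsub: "perm_vec (sig h) ` C \<subseteq> C" if h: "h \<in> carrier G" for h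
    unfolding C_def by (rule perm_vec_row_space[where M=M and n=n, OF sigperm[OF h] sigM[OF h]])
  have sigP: "sig h \<in> PAut n C" if h: "h \<in> carrier G" for h
  proof -
    have hi: "inv\<^bsub>G\<^esub> h \<in> carrier G" using h by simp
    have comp: "sig h (sig (inv\<^bsub>G\<^esub> h) j) = j" for j
    proof (cases "j < n")
      case True
      have "g (sig h (sig (inv\<^bsub>G\<^esub> h) j)) = g j" using sig1[OF h] sig1[OF hi] True h gin
        by (simp add: m_assoc[symmetric])
      thus ?thesis using sig1[OF h] sig1[OF hi] True by (metis ginv)
    next
      case False thus ?thesis by (simp add: sigout)
    qed
    have "C \<subseteq> perm_vec (sig h) ` C"
    proof
      fix x assume "x \<in> C"
      hence "perm_vec (sig (inv\<^bsub>G\<^esub> h)) x \<in> C" using sigsub[OF hi] by blast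
      moreover have "perm_vec (sig h) (perm_vec (sig (inv\<^bsub>G\<^esub> h)) x) = x"
        by (rule perm_vec_comp_inv[OF sigperm[OF h] sigperm[OF hi] comp])
      ultimately show "x \<in> perm_vec (sig h) ` C" by (metis image_eqI)
    qed
    thus ?thesis using sigsub[OF h] sigperm[OF h] unfolding PAut_def by blast
  qed
  have npos: "0 < n" using assms(2,3) one_closed by (metis card_gt_0_iff empty_iff)
  have injs: "inj_on sig (carrier G)"
  proof (rule inj_onI)
    fix h h' assume hh: "h \<in> carrier G" "h' \<in> carrier G" "sig h = sig h'"
    hence "h \<otimes>\<^bsub>G\<^esub> g 0 = h' \<otimes>\<^bsub>G\<^esub> g 0" using sig1 npos by metis
    thus "h = h'" using hh gin npos by simp
  qed
  have cardim: "card (sig ` carrier G) = n" using injs assms(3) by (simp add: card_image)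
  have finP: "finite (PAut n C)" using assms(5) npos unfolding C_def M_def
    by (metis card_ge_0_finite)
  have "sig ` carrier G = PAut n C"
    by (rule card_subset_eq[OF finP]) (use sigP cardim assms(5) in \<open>auto simp: C_def M_def\<close>)
  then obtain h where h: "h \<in> carrier G" and pih: "\<pi> = sig h"
    using assms(6) unfolding C_def M_def by auto
  note pt = assms(7)[unfolded perm_type_def]
  show ?thesis
  proof (cases "h = \<one>\<^bsub>G\<^esub>")
    case True
    have pid: "\<pi> = id"
    proof
      fix j show "\<pi> j = id j"
        using pih True sigout ginv gin by (cases "j < n") (auto simp: sig_def)
    qed
    have "perm_orbit \<pi> i = {i}" for i unfolding perm_orbit_def pid by auto
    hence "{perm_orbit \<pi> i | i. i < n \<and> card (perm_orbit \<pi> i) = p} = {}"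
      using assms(8) by auto
    hence "c = 0" using pt by simp
    thus ?thesis using assms(9) by simp
  next
    case False
    have "{i. i < n \<and> \<pi> i = i} = {}"
    proof (rule ccontr)
      assume "{i. i < n \<and> \<pi> i = i} \<noteq> {}"
      then obtain i where i: "i < n" "sig h i = i" using pih by auto
      hence "h \<otimes>\<^bsub>G\<^esub> g i = \<one>\<^bsub>G\<^esub> \<otimes>\<^bsub>G\<^esub> g i" using sig1[OF h, of i] gin by (metis l_one)
      hence "h = \<one>\<^bsub>G\<^esub>" using h gin i by simp
      thus False using False by simp
    qed
    thus ?thesis using pt by simp
  qed
qed

end
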